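(* Let $T$ be a tournament, let $v\in V(T)$ and let $c\in\mathbb{N}$ with $c\ge 2$. Suppose that $d^+_T(v)\ge 2^{c-1}$. Then there exist disjoint sets $B,E\subseteq V(T)$ and a vertex $b\in B$ such that: (i) $2\le |B|\le c$ and $T[B]$ is a transitive tournament with sink $b$ and source $v$; (ii) $B\setminus\{b\}$ in-dominates $V(T)\setminus(B\cup E)$; (iii) $|E|\le (1/2)^{c-2} d^+_T(v)$.
   Context: $d^+_T(v)$ is the out-degree of $v$ in $T$. A tournament is transitive if its vertices can be enumerated $v_1,\dots,v_m$ so that $v_iv_j$ is an edge iff $i<j$; then $v_1$ is its source and $v_m$ its sink. A set $B$ in-dominates a set $C$ if for every $x\in C$ there is $b'\in B$ with $xb'\in E(T)$. *)

theory Defs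
  imports Complex_Main
begin

definition tournament :: "'a set \<Rightarrow> ('a \<Rightarrow> 'a \<Rightarrow> bool) \<Rightarrow> bool" where
  "tournament V T \<longleftrightarrow> finite V \<and> (\<forall>x\<in>V. \<not> T x x) \<and>
     (\<forall>x\<in>V. \<forall>y\<in>V. x \<noteq> y \<longrightarrow> (T x y \<or> T y x)) \<and>
     (\<forall>x\<in>V. \<forall>y\<in>V. T x y \<longrightarrow> \<not> T y x)"

definition out_degree :: "'a set \<Rightarrow> ('a \<Rightarrow> 'a \<Rightarrow> bool) \<Rightarrow> 'a \<Rightarrow> nat" where
  "out_degree V T v = card {u \<in> V. T v u}"

definition transitive_sub :: "('a \<Rightarrow> 'a \<Rightarrow> bool) \<Rightarrow> 'a set \<Rightarrow> 'a \<Rightarrow> 'a \<Rightarrow> bool" where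
  "transitive_sub T B s t \<longleftrightarrow> (\<exists>vs. distinct vs \<and> set vs = B \<and> vs \<noteq> [] \<and>
     (\<forall>i<length vs. \<forall>j<length vs. T (vs ! i) (vs ! j) \<longleftrightarrow> i < j) \<and>
     hd vs = s \<and> last vs = t)"

definition in_dominates :: "('a \<Rightarrow> 'a \<Rightarrow> bool) \<Rightarrow> 'a set \<Rightarrow> 'a set \<Rightarrow> bool" where
  "in_dominates T B C \<longleftrightarrow> (\<forall>x\<in>C. \<exists>b'\<in>B. T x b')"

end

theory Submission
  imports Defs
begin


lemma avg_lemma:
  assumes tour: "tournament V T" and SV: "S \<subseteq> V" and ne: "S \<noteq> {}"
  shows "\<exists>x\<in>S. 2 * card {y\<in>S. T x y} + 1 \<le> card S"
proof (rule ccontr)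
  assume H: "\<not> ?thesis"
  have fin: "finite S" using tour SV finite_subset unfolding tournament_def by blast
  define n where "n = card S"
  have n1: "n \<ge> 1" using fin ne n_def by (simp add: Suc_le_eq card_gt_0_iff)
  have oi: "card {y\<in>S. T x y} + card {y\<in>S. T y x} = n - 1" if "x \<in> S" for x
  proof -
    have "{y\<in>S. T x y} \<union> {y\<in>S. T y x} = S - {x}"
      using tour SV that unfolding tournament_def by blast
    moreover have "{y\<in>S. T x y} \<inter> {y\<in>S. T y x} = {}"
      using tour SV that unfolding tournament_def by blast
    ultimately have "card {y\<in>S. T x y} + card {y\<in>S. T y x} = card (S - {x})"
      using fin by (metis (no_types, lifting) card_Un_disjoint finite_Diff finite_Un)
    thus ?thesis using that fin n_def by simp
  qed
  have c1: "card {y\<in>S. P y} = (\<Sum>y\<in>S. if P y then 1 else 0)" for P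
    using fin by (simp add: sum.If_cases Int_def)
  have eq: "(\<Sum>x\<in>S. card {y\<in>S. T x y}) = (\<Sum>x\<in>S. card {y\<in>S. T y x})"
    unfolding c1 by (rule sum.swap)
  have "(\<Sum>x\<in>S. card {y\<in>S. T x y} + card {y\<in>S. T y x}) = (\<Sum>x\<in>S. n - 1)"
    using oi by (rule sum.cong[OF refl])
  hence "2 * (\<Sum>x\<in>S. card {y\<in>S. T x y}) = n * (n - 1)"
    using eq n_def by (simp add: sum.distrib)
  moreover have "(\<Sum>x\<in>S. 2 * card {y\<in>S. T x y}) \<ge> (\<Sum>x\<in>S. n)"
    using H n_def by (intro sum_mono) auto
  ultimately have "n * (n - 1) \<ge> n * n" using n_def by (simp add: sum_distrib_left)
  moreover have "n * (n - 1) < n * n" using n1 by simp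
  ultimately show False by linarith
qed


lemma pick_lemma:
  assumes tour: "tournament V T" and SV: "S \<subseteq> V" and two: "card S \<ge> 2"
  shows "\<exists>b\<in>S. 1 \<le> card {y\<in>S. T b y} \<and> 2 * card {y\<in>S. T b y} \<le> card S"
proof -
  have fin: "finite S" using tour SV finite_subset unfolding tournament_def by blast
  have ne: "S \<noteq> {}" using two by auto
  obtain x where x: "x \<in> S" "2 * card {y\<in>S. T x y} + 1 \<le> card S"
    using avg_lemma[OF tour SV ne] by blast
  show ?thesis
  proof (cases "card {y\<in>S. T x y} = 0")
    case False thus ?thesis using x by (intro bexI[of _ x]) auto
  next
    case True
    hence sink: "\<forall>y\<in>S. \<not> T x y" using fin by auto
    have "card (S - {x}) \<ge> 1" using fin x(1) two by simp
    hence S'ne: "S - {x} \<noteq> {}" by (cases "S - {x} = {}") auto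
    obtain y where y: "y \<in> S - {x}" "2 * card {z\<in>S-{x}. T y z} + 1 \<le> card (S - {x})"
      using avg_lemma[OF tour _ S'ne] SV by blast
    have Tyx: "T y x" using tour SV x(1) y(1) sink unfolding tournament_def by blast
    have "{z\<in>S. T y z} = insert x {z\<in>S-{x}. T y z}" using Tyx x(1) by auto
    hence cc: "card {z\<in>S. T y z} = Suc (card {z\<in>S-{x}. T y z})" using fin by simp
    have "card (S - {x}) = card S - 1" using fin x(1) by simp
    thus ?thesis using cc y two by (intro bexI[of _ y]) auto
  qed
qed

definition chain :: "('a \<Rightarrow> 'a \<Rightarrow> bool) \<Rightarrow> 'a list \<Rightarrow> bool" where
  "chain T vs \<longleftrightarrow> (\<forall>i<length vs. \<forall>j<length vs. T (vs ! i) (vs ! j) \<longleftrightarrow> i < j)"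

lemma chain_snoc:
  assumes tour: "tournament V T" and "set vs \<subseteq> V" "b \<in> V" "chain T vs"
    and all: "\<forall>u\<in>set vs. T u b"
  shows "chain T (vs @ [b])"
  unfolding chain_def
proof (intro allI impI)
  fix i j assume i: "i < length (vs @ [b])" and j: "j < length (vs @ [b])"
  have irr: "\<not> T b b" using tour assms(3) unfolding tournament_def by blast
  have asym: "\<not> T b (vs ! k)" if "k < length vs" for k
  proof -
    have "vs ! k \<in> set vs" using that by simp
    thus ?thesis using all tour assms(2,3) unfolding tournament_def by blast
  qed
  show "T ((vs @ [b]) ! i) ((vs @ [b]) ! j) = (i < j)"
  proof (cases "i < length vs")
    case True
    show ?thesis
    proof (cases "j < length vs")
      case True2: True
      thus ?thesis using True assms(4) unfolding chain_def by (simp add: nth_append)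
    next
      case False
      hence "j = length vs" using j by simp
      thus ?thesis using True all by (simp add: nth_append)
    qed
  next
    case False
    hence ii: "i = length vs" using i by simp
    show ?thesis
    proof (cases "j < length vs")
      case True
      thus ?thesis using ii asym by (simp add: nth_append)
    next
      case False
      hence "j = length vs" using j by simp
      thus ?thesis using ii irr by (simp add: nth_append)
    qed
  qed
qed

lemma main_ind:
  assumes tour: "tournament V T"
  shows "\<And>vs S. n = c - length vs \<Longrightarrow> distinct vs \<Longrightarrow> vs \<noteq> [] \<Longrightarrow> hd vs = v \<Longrightarrow>
    set vs \<subseteq> V \<Longrightarrow> chain T vs \<Longrightarrow> S \<subseteq> V \<Longrightarrow> S \<noteq> {} \<Longrightarrow> S \<inter> set vs = {} \<Longrightarrow>
    (\<forall>x\<in>S. \<forall>u\<in>set vs. T u x) \<Longrightarrow> card S * 2 ^ (length vs - 1) \<le> d \<Longrightarrow>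
    (\<forall>x\<in>V - set vs - S. \<exists>u\<in>set vs. T x u) \<Longrightarrow> length vs + 1 \<le> c \<Longrightarrow>
    \<exists>B E b. B \<subseteq> V \<and> E \<subseteq> V \<and> B \<inter> E = {} \<and> b \<in> B \<and>
           2 \<le> card B \<and> card B \<le> c \<and> transitive_sub T B v b \<and>
           in_dominates T (B - {b}) (V - (B \<union> E)) \<and>
           real (card E) \<le> (1/2) ^ (c - 2) * real d"
proof (induction n)
  case 0
  thus ?case by simp
next
  case (Suc n vs S)
  have fin: "finite S" using tour Suc.prems(7) finite_subset unfolding tournament_def by blast
  have finV: "finite V" using tour unfolding tournament_def by blast
  let ?m = "length vs"
  have m1: "?m \<ge> 1" using Suc.prems(3) by (cases vs) auto
  show ?case
  proof (cases "card S \<le> 1 \<or> ?m + 1 = c")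
    case True
    obtain b where b: "b \<in> S" using Suc.prems(8) by blast
    define B where "B = set (vs @ [b])"
    define E where "E = S - {b}"
    have bV: "b \<in> V" using b Suc.prems(7) by blast
    have bnot: "b \<notin> set vs" using b Suc.prems(9) by blast
    have ch: "chain T (vs @ [b])"
      using chain_snoc[OF tour Suc.prems(5) bV Suc.prems(6)] Suc.prems(10) b by blast
    have cB: "card B = ?m + 1" unfolding B_def using Suc.prems(2) bnot
      by (simp add: distinct_card)
    have ts: "transitive_sub T B v b" unfolding transitive_sub_def
      apply (rule exI[of _ "vs @ [b]"])
      using ch Suc.prems(2,3,4) bnot B_def unfolding chain_def by auto
    have Bb: "B - {b} = set vs" unfolding B_def using bnot by auto
    have dom: "in_dominates T (B - {b}) (V - (B \<union> E))"
      unfolding in_dominates_def Bb using Suc.prems(12) unfolding B_def E_def by auto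
    have cE: "real (card E) \<le> (1/2) ^ (c - 2) * real d"
    proof (cases "card S \<le> 1")
      case True
      hence "card E = 0" unfolding E_def using b fin by simp
      thus ?thesis by simp
    next
      case False
      hence mc: "?m + 1 = c" using \<open>card S \<le> 1 \<or> ?m + 1 = c\<close> by blast
      have "card E \<le> card S" unfolding E_def using fin by (simp add: card_mono)
      have "?m - 1 = c - 2" using mc by simp
      hence "card S * 2 ^ (c - 2) \<le> d" using Suc.prems(11) by simp
      hence "card E * 2 ^ (c - 2) \<le> d" using \<open>card E \<le> card S\<close>
        by (meson le_trans mult_le_mono1)
      hence "real (card E * 2 ^ (c - 2)) \<le> real d" by (rule of_nat_mono)
      hence "real (card E) * 2 ^ (c - 2) \<le> real d" by simp
      thus ?thesis by (simp add: field_simps power_divide)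
    qed
    show ?thesis
      apply (rule exI[of _ B], rule exI[of _ E], rule exI[of _ b])
      using cB ts dom cE Suc.prems(5,7,9,13) bV m1 b unfolding B_def E_def by auto
  next
    case False
    hence two: "card S \<ge> 2" and mc: "?m + 2 \<le> c" using Suc.prems(13) by auto
    obtain b where b: "b \<in> S" "1 \<le> card {y\<in>S. T b y}" "2 * card {y\<in>S. T b y} \<le> card S"
      using pick_lemma[OF tour Suc.prems(7) two] by blast
    define S' where "S' = {y\<in>S. T b y}"
    have bV: "b \<in> V" using b Suc.prems(7) by blast
    have bnot: "b \<notin> set vs" using b Suc.prems(9) by blast
    have ch: "chain T (vs @ [b])"
      using chain_snoc[OF tour Suc.prems(5) bV Suc.prems(6)] Suc.prems(10) b by blast
    have irr: "\<not> T b b" using tour bV unfolding tournament_def by blast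
    have S'ne: "S' \<noteq> {}" using b(2) unfolding S'_def by (cases "{y\<in>S. T b y} = {}") auto
    have cS': "card S' * 2 ^ (length (vs @ [b]) - 1) \<le> d"
    proof -
      have "card S' * 2 ^ (length (vs @ [b]) - 1) = (2 * card S') * 2 ^ (?m - 1)"
        using m1 by (cases ?m) auto
      also have "\<dots> \<le> card S * 2 ^ (?m - 1)" using b(3) S'_def by simp
      finally show ?thesis using Suc.prems(11) by linarith
    qed
    have D: "\<forall>x\<in>V - set (vs @ [b]) - S'. \<exists>u\<in>set (vs @ [b]). T x u"
    proof
      fix x assume x: "x \<in> V - set (vs @ [b]) - S'"
      show "\<exists>u\<in>set (vs @ [b]). T x u"
      proof (cases "x \<in> S")
        case True
        hence "T x b" using x tour bV unfolding S'_def tournament_def by auto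
        thus ?thesis by auto
      next
        case False thus ?thesis using x Suc.prems(12) by auto
      qed
    qed
    show ?thesis
      apply (rule Suc.IH[of "vs @ [b]" S'])
      using Suc.prems(1) apply simp
      using Suc.prems(2) bnot apply simp
      apply simp
      using Suc.prems(3,4) apply simp
      using Suc.prems(5) bV apply simp
      using ch apply simp
      using Suc.prems(7) S'_def apply blast
      using S'ne apply simp
      using Suc.prems(9) irr S'_def apply auto[1]
      using Suc.prems(10) S'_def apply auto[1]
      using cS' apply simp
      using D apply simp
      using mc by simp
  qed
qed




theorem lemma2p4:
  fixes V :: "'a set" and T :: "'a \<Rightarrow> 'a \<Rightarrow> bool" and v :: 'a and c :: nat
  assumes "tournament V T" and "v \<in> V" and "c \<ge> 2"
    and "out_degree V T v \<ge> 2 ^ (c - 1)"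
  shows "\<exists>B E b. B \<subseteq> V \<and> E \<subseteq> V \<and> B \<inter> E = {} \<and> b \<in> B \<and>
           2 \<le> card B \<and> card B \<le> c \<and> transitive_sub T B v b \<and>
           in_dominates T (B - {b}) (V - (B \<union> E)) \<and>
           real (card E) \<le> (1/2) ^ (c - 2) * real (out_degree V T v)"

proof -
  define S where "S = {u \<in> V. T v u}"
  define d where "d = out_degree V T v"
  have cS: "card S = d" unfolding S_def d_def out_degree_def by simp
  have "(2::nat) \<le> 2 ^ (c - 1)" using assms(3)
  proof -
    have "(2::nat)^1 \<le> 2^(c-1)" by (rule power_increasing) (use assms(3) in simp_all)
    thus ?thesis by simp
  qed
  hence d2: "d \<ge> 2" using assms(4) d_def by linarith
  have Sne: "S \<noteq> {}" using cS d2 by auto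
  have irr: "\<not> T v v" using assms(1,2) unfolding tournament_def by blast
  show ?thesis
    unfolding d_def[symmetric]
    apply (rule main_ind[OF assms(1), of "c - 1" c "[v]" v S d])
    using assms(3) apply simp
    apply simp apply simp apply simp
    using assms(2) apply simp
    using irr apply (simp add: chain_def)
    apply (simp add: S_def)
    using Sne apply simp
    using irr apply (simp add: S_def)
    apply (simp add: S_def)
    using cS apply simp
    using assms(1,2) unfolding tournament_def S_def apply auto[1]
    using assms(3) by simp
qed

end
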